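(* In the setting described in the context, for any $w_N \in \mathcal V_N$ with coefficient tensor $W$ and the Galerkin solution $u_N \in \mathcal V_N$, \[ \|u_N - w_N\|_{\mathcal A_+} \leq (\check c_{\vartheta \rho}^+)^{-1}\, \eta_{\mathrm{disc}}(w_N). \]
   Context: Let $D\subset\mathbb R^d$ be a bounded Lipschitz domain, $\mathcal X=H^1_0(D)$, $f\in L^2(D)$. Let $\Gamma=\mathbb R^L$ ($L\ge M$), $\gamma=\bigotimes_{\ell=1}^L\gamma_\ell$ with $\gamma_\ell=N(0,1)$, and for given $\sigma_\ell\ge1$ let $\gamma_{\vartheta\rho}=\bigotimes_\ell N(0,\sigma_\ell^2)$. For $\mu\in\mathbb N_0^L$, $H_\mu(y)=\prod_\ell H_{\mu_\ell}(y_\ell)$ with $H_{n}(y_\ell)=h_{n}(y_\ell/\sigma_\ell)$, $h_n$ the normalized probabilists' Hermite polynomials (so $(H_\mu)$ is orthonormal in $L^2(\Gamma,\gamma_{\vartheta\rho})$). Let $\mathcal V_{\vartheta\rho}=L^2(\Gamma,\gamma_{\vartheta\rho};\mathcal X)$ and $\|v\|^2_{L^2(\Gamma,\gamma;\mathcal X)}=\int_\Gamma\|\nabla v(\cdot,y)\|^2_{L^2(D)}d\gamma(y)$. Let $a_{\Delta,s}:D\times\Gamma\to\mathbb R$ be a coefficient polynomial in $y$, $B(v,w)=\int_\Gamma\int_D a_{\Delta,s}\nabla v\cdot\nabla w\,dx\,d\gamma_{\vartheta\rho}$ (the bilinear form of $\mathcal A_+$), assumed bounded on $\mathcal V_{\vartheta\rho}$,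 with energy norm $\|v\|_{\mathcal A_+}=B(v,v)^{1/2}$ and coercivity constant $\check c^+_{\vartheta\rho}>0$ such that $\check c^+_{\vartheta\rho}\|v\|_{L^2(\Gamma,\gamma;\mathcal X)}\le\|v\|_{\mathcal A_+}$ for all $v\in\mathcal V_{\vartheta\rho}$. Let $\{\varphi_0,\dots,\varphi_{N-1}\}\subset\mathcal X$ be a finite element basis, $d_1,\dots,d_M\in\mathbb N$, $\Lambda=\{\mu\in\mathbb N_0^L:\mu_m<d_m\ (m\le M),\ \mu_\ell=0\ (\ell>M)\}$, and $\mathcal V_N=\mathrm{span}\{\varphi_iH_\mu\}$; elements $v_N=\sum_{i,\mu}V(i,\mu)\varphi_iH_\mu$ are identified with tensors $V\in\mathbb R^{N\times d_1\times\cdots\times d_M}$. The Galerkin solution $u_N\in\mathcal V_N$ (tensor $U$) satisfies $B(u_N,v)=\int_\Gamma\int_D fv\,dx\,d\gamma_{\vartheta\rho}$ for all $v\in\mathcal V_N$. For $w_N$ with tensor $W$ define $\mathbf A(W)(i,\mu)=B(w_N,\varphi_iH_\mu)$ and $F(i,\mu)=\int_\Gamma\int_D f\varphi_iH_\mu\,dx\,d\gamma_{\vartheta\rho}$. Let $\mathbf H_{\vartheta\rho\to0}=Z_0\otimes Z_1\otimes\cdots\otimes Z_M$ acting on $\mathbb R^{N\times d_1\times\cdots\times d_M}$, with $Z_0(i,j)=\int_D\nabla\varphi_i\cdot\nabla\varphi_j\,dx$ and $Z_m(\mu_m,\mu_m')=\int_{\mathbb R}H_{\mu_m}(y_m)H_{\mu_m'}(y_m)\,d\gamma_m(y_m)$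 (symmetric positive definite), and $\mathbf H_{\vartheta\rho\to0}^{-1/2}$ its inverse square root. The algebraic estimator is $\eta_{\mathrm{disc}}(w_N)=\|\mathbf H_{\vartheta\rho\to0}^{-1/2}(\mathbf A(W)-F)\|_{\ell^2}$ (Euclidean norm of the tensor). *)

theory Defs
  imports "HOL-Probability.Probability"
begin

fun hermite_prob :: "nat \<Rightarrow> real \<Rightarrow> real" where
  "hermite_prob 0 t = 1"
| "hermite_prob (Suc 0) t = t"
| "hermite_prob (Suc (Suc n)) t = t * hermite_prob (Suc n) t - real (Suc n) * hermite_prob n t"

definition hermite_norm :: "nat \<Rightarrow> real \<Rightarrow> real" where
  "hermite_norm n t = hermite_prob n t / sqrt (fact n)"

definition Hmu :: "(nat \<Rightarrow> real) \<Rightarrow> nat \<Rightarrow> (nat \<Rightarrow> nat) \<Rightarrow> (nat \<Rightarrow> real) \<Rightarrow> real" where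
  "Hmu \<sigma> L \<mu> y = (\<Prod>l<L. hermite_norm (\<mu> l) (y l / \<sigma> l))"

definition gauss_std :: "nat \<Rightarrow> (nat \<Rightarrow> real) measure" where
  "gauss_std L = PiM {..<L} (\<lambda>l. density lborel std_normal_density)"

definition gauss_sigma :: "(nat \<Rightarrow> real) \<Rightarrow> nat \<Rightarrow> (nat \<Rightarrow> real) measure" where
  "gauss_sigma \<sigma> L = PiM {..<L} (\<lambda>l. density lborel (normal_density 0 (\<sigma> l)))"

text \<open>Multi-index set Lambda (0-based: the first M coordinates 0..M-1 are active).\<close>

definition Lam :: "nat \<Rightarrow> (nat \<Rightarrow> nat) \<Rightarrow> (nat \<Rightarrow> nat) set" where
  "Lam M d = {\<mu>. \<forall>l. (l < M \<longrightarrow> \<mu> l < d l) \<and> (M \<le> l \<longrightarrow> \<mu> l = 0)}"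

definition Idx :: "nat \<Rightarrow> nat \<Rightarrow> (nat \<Rightarrow> nat) \<Rightarrow> (nat \<times> (nat \<Rightarrow> nat)) set" where
  "Idx N M d = {..<N} \<times> Lam M d"

definition fe_fun :: "nat \<Rightarrow> nat \<Rightarrow> (nat \<Rightarrow> nat) \<Rightarrow> (nat \<Rightarrow> real) \<Rightarrow> nat
    \<Rightarrow> (nat \<Rightarrow> 'd \<Rightarrow> real) \<Rightarrow> (nat \<times> (nat \<Rightarrow> nat) \<Rightarrow> real) \<Rightarrow> 'd \<Rightarrow> (nat \<Rightarrow> real) \<Rightarrow> real" where
  "fe_fun N M d \<sigma> L \<phi> V x y = (\<Sum>(i,\<mu>)\<in>Idx N M d. V (i,\<mu>) * \<phi> i x * Hmu \<sigma> L \<mu> y)"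

definition fe_grad :: "nat \<Rightarrow> nat \<Rightarrow> (nat \<Rightarrow> nat) \<Rightarrow> (nat \<Rightarrow> real) \<Rightarrow> nat
    \<Rightarrow> (nat \<Rightarrow> 'd \<Rightarrow> 'd::real_vector) \<Rightarrow> (nat \<times> (nat \<Rightarrow> nat) \<Rightarrow> real) \<Rightarrow> 'd \<Rightarrow> (nat \<Rightarrow> real) \<Rightarrow> 'd" where
  "fe_grad N M d \<sigma> L g\<phi> V x y = (\<Sum>(i,\<mu>)\<in>Idx N M d. (V (i,\<mu>) * Hmu \<sigma> L \<mu> y) *\<^sub>R g\<phi> i x)"

text \<open>Unit tensor e_p (coefficients of the basis function phi_i H_mu).\<close>

definition unit_tensor :: "nat \<times> (nat \<Rightarrow> nat) \<Rightarrow> nat \<times> (nat \<Rightarrow> nat) \<Rightarrow> real" where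
  "unit_tensor p = (\<lambda>q. if q = p then 1 else 0)"

text \<open>B(v,w) = int_Gamma int_D a grad v . grad w dx dgamma_sigma, written in terms of the
  x-gradients of v and w.\<close>

definition Bform :: "'d::euclidean_space set \<Rightarrow> ('d \<Rightarrow> (nat \<Rightarrow> real) \<Rightarrow> real) \<Rightarrow> (nat \<Rightarrow> real) measure
    \<Rightarrow> ('d \<Rightarrow> (nat \<Rightarrow> real) \<Rightarrow> 'd) \<Rightarrow> ('d \<Rightarrow> (nat \<Rightarrow> real) \<Rightarrow> 'd) \<Rightarrow> real" where
  "Bform D a G gv gw = (\<integral>y. (\<integral>x. a x y * (gv x y \<bullet> gw x y) \<partial>(lebesgue_on D)) \<partial>G)"

text \<open>Norm of L^2(Gamma, G; H^1_0(D)) (with the gradient norm on H^1_0(D)).\<close>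

definition L2X_norm :: "'d::euclidean_space set \<Rightarrow> (nat \<Rightarrow> real) measure
    \<Rightarrow> ('d \<Rightarrow> (nat \<Rightarrow> real) \<Rightarrow> 'd) \<Rightarrow> real" where
  "L2X_norm D G gv = sqrt (\<integral>y. (\<integral>x. (norm (gv x y))\<^sup>2 \<partial>(lebesgue_on D)) \<partial>G)"

definition rhs_int :: "'d::euclidean_space set \<Rightarrow> ('d \<Rightarrow> real) \<Rightarrow> (nat \<Rightarrow> real) measure
    \<Rightarrow> ('d \<Rightarrow> (nat \<Rightarrow> real) \<Rightarrow> real) \<Rightarrow> real" where
  "rhs_int D f G v = (\<integral>y. (\<integral>x. f x * v x y \<partial>(lebesgue_on D)) \<partial>G)"

text \<open>For Lipschitz domains the
  extension by zero characterises H^1_0(D).\<close>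

definition in_H10_with_grad :: "'d::euclidean_space set \<Rightarrow> ('d \<Rightarrow> real) \<Rightarrow> ('d \<Rightarrow> 'd) \<Rightarrow> bool" where
  "in_H10_with_grad D \<phi> g \<longleftrightarrow>
     \<phi> \<in> borel_measurable lborel \<and> g \<in> borel_measurable lborel \<and>
     (\<forall>x. x \<notin> D \<longrightarrow> \<phi> x = 0 \<and> g x = 0) \<and>
     integrable lborel (\<lambda>x. (\<phi> x)\<^sup>2) \<and> integrable lborel (\<lambda>x. (norm (g x))\<^sup>2) \<and>
     (\<forall>\<psi> D\<psi>. (\<forall>x. (\<psi> has_derivative (\<lambda>h. D\<psi> x \<bullet> h)) (at x)) \<and> continuous_on UNIV D\<psi> \<and>
                compact (closure {x. \<psi> x \<noteq> 0}) \<longrightarrow>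
        (\<forall>b\<in>Basis. (\<integral>x. \<phi> x * (D\<psi> x \<bullet> b) \<partial>lborel) = - (\<integral>x. (g x \<bullet> b) * \<psi> x \<partial>lborel)))"

definition Z0 :: "'d::euclidean_space set \<Rightarrow> (nat \<Rightarrow> 'd \<Rightarrow> 'd) \<Rightarrow> nat \<Rightarrow> nat \<Rightarrow> real" where
  "Z0 D g\<phi> i j = (\<integral>x. g\<phi> i x \<bullet> g\<phi> j x \<partial>(lebesgue_on D))"

definition Zm :: "(nat \<Rightarrow> real) \<Rightarrow> nat \<Rightarrow> nat \<Rightarrow> nat \<Rightarrow> real" where
  "Zm \<sigma> m k k' = (\<integral>t. hermite_norm k (t / \<sigma> m) * hermite_norm k' (t / \<sigma> m)
                      \<partial>(density lborel std_normal_density))"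

text \<open>Kernel of H = Z_0 (x) Z_1 (x) ... (x) Z_M on the index set Idx (coordinates 0..M-1).\<close>

definition Hker :: "'d::euclidean_space set \<Rightarrow> (nat \<Rightarrow> 'd \<Rightarrow> 'd) \<Rightarrow> (nat \<Rightarrow> real) \<Rightarrow> nat
    \<Rightarrow> nat \<times> (nat \<Rightarrow> nat) \<Rightarrow> nat \<times> (nat \<Rightarrow> nat) \<Rightarrow> real" where
  "Hker D g\<phi> \<sigma> M p q = Z0 D g\<phi> (fst p) (fst q) * (\<Prod>m<M. Zm \<sigma> m (snd p m) (snd q m))"

definition is_inv_sqrt :: "'i set \<Rightarrow> ('i \<Rightarrow> 'i \<Rightarrow> real) \<Rightarrow> ('i \<Rightarrow> 'i \<Rightarrow> real) \<Rightarrow> bool" where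
  "is_inv_sqrt I K S \<longleftrightarrow>
     (\<forall>p\<in>I. \<forall>q\<in>I. S p q = S q p) \<and>
     (\<forall>V. (\<exists>p\<in>I. V p \<noteq> 0) \<longrightarrow> (\<Sum>p\<in>I. \<Sum>q\<in>I. V p * S p q * V q) > 0) \<and>
     (\<forall>p\<in>I. \<forall>r\<in>I. (\<Sum>q\<in>I. \<Sum>s\<in>I. S p q * S q s * K s r) = (if p = r then 1 else 0))"

definition apply_norm :: "'i set \<Rightarrow> ('i \<Rightarrow> 'i \<Rightarrow> real) \<Rightarrow> ('i \<Rightarrow> real) \<Rightarrow> real" where
  "apply_norm I S R = sqrt (\<Sum>p\<in>I. (\<Sum>q\<in>I. S p q * R q)\<^sup>2)"

definition poly_in_y :: "nat \<Rightarrow> ('d::euclidean_space \<Rightarrow> (nat \<Rightarrow> real) \<Rightarrow> real) \<Rightarrow> bool" where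
  "poly_in_y L a \<longleftrightarrow> (\<exists>K c. finite K \<and> (\<forall>\<nu>\<in>K. c \<nu> \<in> borel_measurable lborel) \<and>
       (\<forall>x y. a x y = (\<Sum>\<nu>\<in>K. c \<nu> x * (\<Prod>l<L. (y l) ^ (\<nu> l)))))"

end

theory Submission
  imports Defs "HOL-Computational_Algebra.Polynomial"
begin

fun hp :: "nat \<Rightarrow> real poly" where
  "hp 0 = 1"
| "hp (Suc 0) = [:0, 1:]"
| "hp (Suc (Suc n)) = [:0, 1:] * hp (Suc n) - smult (real (Suc n)) (hp n)"

lemma poly_hp: "poly (hp n) t = hermite_prob n t"
  by (induction n rule: hp.induct) auto

lemma hermite_norm_poly: "\<exists>Q. \<forall>t. hermite_norm k (t / s) = poly Q t"
proof -
  have "hermite_norm k (t / s) = poly (smult (1 / sqrt (fact k)) (pcompose (hp k) [:0, 1/s:])) t" for t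
    by (simp add: hermite_norm_def poly_pcompose poly_hp)
  then show ?thesis by blast
qed

lemma integrable_poly_std: "integrable std_normal_distribution (\<lambda>t. poly Q t)"
  unfolding poly_altdef
  by (auto intro!: integrable_sum integrable_mult_right integrable_std_normal_distribution_moment)

lemma integrable_herm2:
  "integrable std_normal_distribution (\<lambda>t. hermite_norm k (t / s) * hermite_norm k' (t / s))"
proof -
  obtain Q1 where Q1: "\<And>t. hermite_norm k (t / s) = poly Q1 t" using hermite_norm_poly by blast
  obtain Q2 where Q2: "\<And>t. hermite_norm k' (t / s) = poly Q2 t" using hermite_norm_poly by blast
  show ?thesis unfolding Q1 Q2 poly_mult[symmetric] by (rule integrable_poly_std)
qed

lemma psf_std: "product_sigma_finite (\<lambda>_::nat. std_normal_distribution)"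
  unfolding product_sigma_finite_def
  using prob_space_imp_sigma_finite[OF prob_space_normal_density, of 1 0] by auto

lemma hermite_norm_0[simp]: "hermite_norm 0 t = 1"
  by (simp add: hermite_norm_def)

lemma gauss_int:
  assumes "M \<le> L" "\<mu> \<in> Lam M d" "\<mu>' \<in> Lam M d"
  shows "integrable (gauss_std L) (\<lambda>y. Hmu \<sigma> L \<mu> y * Hmu \<sigma> L \<mu>' y)"
    and "(\<integral>y. Hmu \<sigma> L \<mu> y * Hmu \<sigma> L \<mu>' y \<partial>gauss_std L) = (\<Prod>m<M. Zm \<sigma> m (\<mu> m) (\<mu>' m))"
proof -
  have eq: "Hmu \<sigma> L \<mu> y * Hmu \<sigma> L \<mu>' y = (\<Prod>l\<in>{..<L}. (\<lambda>l t. hermite_norm (\<mu> l) (t / \<sigma> l) * hermite_norm (\<mu>' l) (t / \<sigma> l)) l (y l))" for y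
    unfolding Hmu_def by (simp add: prod.distrib)
  show "integrable (gauss_std L) (\<lambda>y. Hmu \<sigma> L \<mu> y * Hmu \<sigma> L \<mu>' y)"
    unfolding eq gauss_std_def
    by (rule product_sigma_finite.product_integrable_prod[OF psf_std]) (auto intro: integrable_herm2)
  have "(\<integral>y. Hmu \<sigma> L \<mu> y * Hmu \<sigma> L \<mu>' y \<partial>gauss_std L) =
     (\<Prod>l\<in>{..<L}. \<integral>t. hermite_norm (\<mu> l) (t / \<sigma> l) * hermite_norm (\<mu>' l) (t / \<sigma> l) \<partial>std_normal_distribution)"
    unfolding eq gauss_std_def
    by (rule product_sigma_finite.product_integral_prod[OF psf_std]) (auto intro: integrable_herm2)
  also have "\<dots> = (\<Prod>l\<in>{..<M}. \<integral>t. hermite_norm (\<mu> l) (t / \<sigma> l) * hermite_norm (\<mu>' l) (t / \<sigma> l) \<partial>std_normal_distribution)"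
  proof (rule prod.mono_neutral_right)
    show "\<forall>i\<in>{..<L} - {..<M}. (\<integral>t. hermite_norm (\<mu> i) (t / \<sigma> i) * hermite_norm (\<mu>' i) (t / \<sigma> i) \<partial>std_normal_distribution) = 1"
    proof
      fix i assume "i \<in> {..<L} - {..<M}"
      then have "M \<le> i" by auto
      then have "\<mu> i = 0" "\<mu>' i = 0" using assms(2,3) unfolding Lam_def by blast+
      then show "(\<integral>t. hermite_norm (\<mu> i) (t / \<sigma> i) * hermite_norm (\<mu>' i) (t / \<sigma> i) \<partial>std_normal_distribution) = 1"
        using prob_space.prob_space[OF prob_space_normal_density, of 1 0] by simp
    qed
  qed (use assms in auto)
  also have "\<dots> = (\<Prod>m<M. Zm \<sigma> m (\<mu> m) (\<mu>' m))" by (simp add: Zm_def)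
  finally show "(\<integral>y. Hmu \<sigma> L \<mu> y * Hmu \<sigma> L \<mu>' y \<partial>gauss_std L) = (\<Prod>m<M. Zm \<sigma> m (\<mu> m) (\<mu>' m))" .
qed

lemma iter_int_sum:
  fixes k :: "'i \<Rightarrow> 'i \<Rightarrow> 'x \<Rightarrow> 'y \<Rightarrow> real"
  assumes fin: "finite I" and s1: "sigma_finite_measure M1" and s2: "sigma_finite_measure M2"
    and int: "\<And>p q. p \<in> I \<Longrightarrow> q \<in> I \<Longrightarrow> integrable (M1 \<Otimes>\<^sub>M M2) (\<lambda>(x, y). k p q x y)"
  shows "(\<integral>y. (\<integral>x. (\<Sum>p\<in>I. \<Sum>q\<in>I. c p q * k p q x y) \<partial>M1) \<partial>M2)
       = (\<Sum>p\<in>I. \<Sum>q\<in>I. c p q * (\<integral>y. (\<integral>x. k p q x y \<partial>M1) \<partial>M2))"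
proof -
  interpret P: pair_sigma_finite M1 M2 using s1 s2 by (simp add: pair_sigma_finite_def)
  interpret Q: pair_sigma_finite M2 M1 using s1 s2 by (simp add: pair_sigma_finite_def)
  have int2: "integrable (M2 \<Otimes>\<^sub>M M1) (\<lambda>(y, x). k p q x y)" if "p \<in> I" "q \<in> I" for p q
    using P.integrable_product_swap[OF int[OF that]] by (simp add: case_prod_beta')
  have int3: "integrable (M2 \<Otimes>\<^sub>M M1) (\<lambda>(y, x). \<Sum>p\<in>I. \<Sum>q\<in>I. c p q * k p q x y)"
  proof -
    have "integrable (M2 \<Otimes>\<^sub>M M1) (\<lambda>z. \<Sum>p\<in>I. \<Sum>q\<in>I. c p q * (\<lambda>(y, x). k p q x y) z)"
      using int2 by (auto intro!: integrable_sum integrable_mult_right)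
    then show ?thesis by (simp add: case_prod_beta')
  qed
  have AEi: "AE y in M2. \<forall>p\<in>I. \<forall>q\<in>I. integrable M1 (\<lambda>x. k p q x y)"
  proof -
    have "\<forall>p\<in>I. AE y in M2. \<forall>q\<in>I. integrable M1 (\<lambda>x. k p q x y)"
    proof
      fix p assume p: "p \<in> I"
      have "\<forall>q\<in>I. AE y in M2. integrable M1 (\<lambda>x. k p q x y)"
        using Q.AE_integrable_fst'[OF int2[OF p]] by simp
      then show "AE y in M2. \<forall>q\<in>I. integrable M1 (\<lambda>x. k p q x y)"
        by (rule eventually_ball_finite[OF fin])
    qed
    then show ?thesis by (rule eventually_ball_finite[OF fin])
  qed
  have ifst: "integrable M2 (\<lambda>y. \<integral>x. k p q x y \<partial>M1)" if "p \<in> I" "q \<in> I" for p q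
    using Q.integrable_fst'[OF int2[OF that]] by simp
  have "(\<integral>y. (\<integral>x. (\<Sum>p\<in>I. \<Sum>q\<in>I. c p q * k p q x y) \<partial>M1) \<partial>M2)
       = (\<integral>y. (\<Sum>p\<in>I. \<Sum>q\<in>I. c p q * (\<integral>x. k p q x y \<partial>M1)) \<partial>M2)"
  proof (rule integral_cong_AE)
    show "(\<lambda>y. \<integral>x. (\<Sum>p\<in>I. \<Sum>q\<in>I. c p q * k p q x y) \<partial>M1) \<in> borel_measurable M2"
      using Q.integrable_fst'[OF int3] by simp
    show "(\<lambda>y. \<Sum>p\<in>I. \<Sum>q\<in>I. c p q * (\<integral>x. k p q x y \<partial>M1)) \<in> borel_measurable M2"
      using ifst by (intro borel_measurable_sum borel_measurable_times borel_measurable_const) auto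
    show "AE y in M2. (\<integral>x. (\<Sum>p\<in>I. \<Sum>q\<in>I. c p q * k p q x y) \<partial>M1) = (\<Sum>p\<in>I. \<Sum>q\<in>I. c p q * (\<integral>x. k p q x y \<partial>M1))"
      using AEi
    proof eventually_elim
      case (elim y)
      then show ?case
        by (simp add: integral_sum integrable_sum integral_mult_right_zero)
    qed
  qed
  also have "\<dots> = (\<Sum>p\<in>I. \<Sum>q\<in>I. c p q * (\<integral>y. (\<integral>x. k p q x y \<partial>M1) \<partial>M2))"
    using ifst by (simp add: integral_sum integrable_sum integral_mult_right_zero)
  finally show ?thesis .
qed

definition mv :: "'i set \<Rightarrow> ('i \<Rightarrow> 'i \<Rightarrow> real) \<Rightarrow> ('i \<Rightarrow> real) \<Rightarrow> 'i \<Rightarrow> real" where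
  "mv I A v = (\<lambda>p. \<Sum>q\<in>I. A p q * v q)"

definition dt :: "'i set \<Rightarrow> ('i \<Rightarrow> real) \<Rightarrow> ('i \<Rightarrow> real) \<Rightarrow> real" where
  "dt I u v = (\<Sum>p\<in>I. u p * v p)"

lemma sum_ind1: "finite I \<Longrightarrow> p \<in> I \<Longrightarrow> (\<Sum>r\<in>I. (if p = r then 1 else 0) * v r) = (v p::real)"
proof -
  assume "finite I" "p \<in> I"
  have "(\<Sum>r\<in>I. (if p = r then 1 else 0) * v r) = (\<Sum>r\<in>I. if p = r then v r else 0)"
    by (intro sum.cong) auto
  then show ?thesis using \<open>finite I\<close> \<open>p \<in> I\<close> by simp
qed

lemma sum_ind2: "finite I \<Longrightarrow> p \<in> I \<Longrightarrow> (\<Sum>r\<in>I. (if r = p then 1 else 0) * v r) = (v p::real)"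
proof -
  assume "finite I" "p \<in> I"
  have "(\<Sum>r\<in>I. (if r = p then 1 else 0) * v r) = (\<Sum>r\<in>I. if p = r then v r else 0)"
    by (intro sum.cong) auto
  then show ?thesis using \<open>finite I\<close> \<open>p \<in> I\<close> by simp
qed

lemma dt_mv:
  assumes "\<forall>p\<in>I. \<forall>q\<in>I. A p q = A q p"
  shows "dt I u (mv I A v) = dt I (mv I A u) v"
proof -
  have "dt I u (mv I A v) = (\<Sum>p\<in>I. \<Sum>q\<in>I. u p * A p q * v q)"
    by (simp add: dt_def mv_def sum_distrib_left mult.assoc)
  also have "\<dots> = (\<Sum>q\<in>I. \<Sum>p\<in>I. u p * A p q * v q)" by (rule sum.swap)
  also have "\<dots> = (\<Sum>q\<in>I. \<Sum>p\<in>I. A q p * u p * v q)"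
    using assms by (intro sum.cong refl) (auto simp: mult.commute)
  also have "\<dots> = dt I (mv I A u) v"
    by (simp add: dt_def mv_def sum_distrib_right)
  finally show ?thesis .
qed

lemma dt_cong: "(\<And>p. p \<in> I \<Longrightarrow> u p = u' p) \<Longrightarrow> (\<And>p. p \<in> I \<Longrightarrow> v p = v' p) \<Longrightarrow> dt I u v = dt I u' v'"
  by (simp add: dt_def)

lemma mv3:
  assumes "finite I" and inv: "\<forall>p\<in>I. \<forall>r\<in>I. (\<Sum>q\<in>I. \<Sum>s\<in>I. A p q * B q s * C s r) = (if p = r then 1 else 0)"
    and p: "p \<in> I"
  shows "mv I A (mv I B (mv I C v)) p = v p"
proof -
  have "mv I A (mv I B (mv I C v)) p = (\<Sum>q\<in>I. \<Sum>s\<in>I. \<Sum>r\<in>I. A p q * B q s * C s r * v r)"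
    by (simp add: mv_def sum_distrib_left mult.assoc)
  also have "\<dots> = (\<Sum>q\<in>I. \<Sum>r\<in>I. \<Sum>s\<in>I. A p q * B q s * C s r * v r)"
    by (intro sum.cong refl sum.swap)
  also have "\<dots> = (\<Sum>r\<in>I. \<Sum>q\<in>I. \<Sum>s\<in>I. A p q * B q s * C s r * v r)"
    by (rule sum.swap)
  also have "\<dots> = (\<Sum>r\<in>I. (\<Sum>q\<in>I. \<Sum>s\<in>I. A p q * B q s * C s r) * v r)"
    by (simp add: sum_distrib_right)
  also have "\<dots> = (\<Sum>r\<in>I. (if p = r then 1 else 0) * v r)"
    using inv p by (intro sum.cong refl) auto
  also have "\<dots> = v p" using assms by (simp add: sum_ind1)
  finally show ?thesis .
qed

lemma mat_cs:
  fixes S K :: "'i \<Rightarrow> 'i \<Rightarrow> real"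
  assumes fin: "finite I" and symS: "\<forall>p\<in>I. \<forall>q\<in>I. S p q = S q p"
    and symK: "\<forall>p\<in>I. \<forall>q\<in>I. K p q = K q p"
    and inv: "\<forall>p\<in>I. \<forall>r\<in>I. (\<Sum>q\<in>I. \<Sum>s\<in>I. S p q * S q s * K s r) = (if p = r then 1 else 0)"
  shows "(\<Sum>p\<in>I. E p * R p)\<^sup>2 \<le> (\<Sum>p\<in>I. \<Sum>q\<in>I. E p * K p q * E q) * (\<Sum>p\<in>I. (\<Sum>q\<in>I. S p q * R q)\<^sup>2)"
proof -
  have m2: "mv I S (mv I S (mv I K v)) p = v p" if "p \<in> I" for v p
    by (rule mv3[OF fin inv that])
  have m3: "mv I K (mv I S (mv I S v)) p = v p" if p: "p \<in> I" for v p
  proof -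
    define u where "u = (\<lambda>q. if q = p then 1 else (0::real))"
    have "mv I K (mv I S (mv I S v)) p = dt I u (mv I K (mv I S (mv I S v)))"
      using fin p by (simp add: dt_def u_def sum_ind2)
    also have "\<dots> = dt I (mv I S (mv I S (mv I K u))) v"
      using symS symK by (simp add: dt_mv)
    also have "\<dots> = dt I u v"
      by (rule dt_cong) (auto simp: m2)
    also have "\<dots> = v p" using fin p by (simp add: dt_def u_def sum_ind2)
    finally show ?thesis .
  qed
  define x where "x = mv I S R"
  define y where "y = mv I S (mv I K E)"
  have "(\<Sum>p\<in>I. E p * R p) = dt I E R" by (simp add: dt_def)
  also have "\<dots> = dt I E (mv I K (mv I S x))"
    unfolding x_def by (rule dt_cong) (auto simp: m3)
  also have "\<dots> = dt I y x"
    unfolding y_def using symS symK by (simp add: dt_mv)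
  finally have ER: "(\<Sum>p\<in>I. E p * R p) = dt I y x" .
  have "dt I y y = dt I (mv I K E) (mv I S (mv I S (mv I K E)))"
    unfolding y_def using symS by (simp add: dt_mv)
  also have "\<dots> = dt I (mv I K E) E"
    by (rule dt_cong) (auto simp: m2)
  also have "\<dots> = dt I E (mv I K E)"
    using symK by (simp add: dt_mv)
  also have "\<dots> = (\<Sum>p\<in>I. \<Sum>q\<in>I. E p * K p q * E q)"
    by (simp add: dt_def mv_def sum_distrib_left mult_ac)
  finally have yy: "dt I y y = (\<Sum>p\<in>I. \<Sum>q\<in>I. E p * K p q * E q)" .
  have xx: "dt I x x = (\<Sum>p\<in>I. (\<Sum>q\<in>I. S p q * R q)\<^sup>2)"
    by (simp add: dt_def x_def mv_def power2_eq_square)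
  have "(dt I y x)\<^sup>2 \<le> dt I y y * dt I x x"
    unfolding dt_def using Cauchy_Schwarz_ineq_sum[of y x I] by (simp add: power2_eq_square)
  then show ?thesis using ER yy xx by simp
qed

lemma finite_Lam: "finite (Lam M d)"
proof -
  define K where "K = (\<Sum>m<M. d m)"
  have sub: "Lam M d \<subseteq> (\<lambda>xs l. if l < M then xs ! l else 0) ` {xs. set xs \<subseteq> {..<K} \<and> length xs = M}"
  proof
    fix \<mu> assume mu: "\<mu> \<in> Lam M d"
    have bnd: "\<mu> l < K" if "l < M" for l
    proof -
      have "\<mu> l < d l" using mu that by (auto simp: Lam_def)
      also have "d l \<le> K" unfolding K_def using that
        by (intro member_le_sum) auto
      finally show ?thesis .
    qed
    have "\<mu> = (\<lambda>l. if l < M then map \<mu> [0..<M] ! l else 0)"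
      using mu by (auto simp: Lam_def fun_eq_iff)
    moreover have "map \<mu> [0..<M] \<in> {xs. set xs \<subseteq> {..<K} \<and> length xs = M}"
      using bnd by auto
    ultimately show "\<mu> \<in> (\<lambda>xs l. if l < M then xs ! l else 0) ` {xs. set xs \<subseteq> {..<K} \<and> length xs = M}"
      by blast
  qed
  have fin: "finite {xs. set xs \<subseteq> {..<K} \<and> length xs = M}"
    by (rule finite_lists_length_eq) auto
  show ?thesis by (rule finite_subset[OF sub finite_imageI[OF fin]])
qed

lemma finite_Idx: "finite (Idx N M d)"
  unfolding Idx_def using finite_Lam by auto

lemma fe_grad_alt: "fe_grad N M d \<sigma> L g\<phi> V x y = (\<Sum>p\<in>Idx N M d. (V p * Hmu \<sigma> L (snd p) y) *\<^sub>R g\<phi> (fst p) x)"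
  unfolding fe_grad_def by (simp add: case_prod_beta')

lemma grad_inner:
  "fe_grad N M d \<sigma> L g\<phi> V x y \<bullet> fe_grad N M d \<sigma> L g\<phi> V' x y =
    (\<Sum>p\<in>Idx N M d. \<Sum>q\<in>Idx N M d. V p * V' q *
        ((g\<phi> (fst p) x \<bullet> g\<phi> (fst q) x) * Hmu \<sigma> L (snd p) y * Hmu \<sigma> L (snd q) y))"
proof -
  have "fe_grad N M d \<sigma> L g\<phi> V x y \<bullet> fe_grad N M d \<sigma> L g\<phi> V' x y =
    (\<Sum>p\<in>Idx N M d. \<Sum>q\<in>Idx N M d. ((V p * Hmu \<sigma> L (snd p) y) *\<^sub>R g\<phi> (fst p) x) \<bullet> ((V' q * Hmu \<sigma> L (snd q) y) *\<^sub>R g\<phi> (fst q) x))"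
    unfolding fe_grad_alt inner_sum_left inner_sum_right by (rule sum.swap)
  also have "\<dots> = (\<Sum>p\<in>Idx N M d. \<Sum>q\<in>Idx N M d. V p * V' q *
        ((g\<phi> (fst p) x \<bullet> g\<phi> (fst q) x) * Hmu \<sigma> L (snd p) y * Hmu \<sigma> L (snd q) y))"
    by (intro sum.cong refl) (simp only: inner_scaleR_left inner_scaleR_right mult_ac)
  finally show ?thesis .
qed

lemma gphi_int:
  assumes h1: "in_H10_with_grad D \<phi>1 g1" and h2: "in_H10_with_grad D \<phi>2 g2"
    and Dm: "D \<in> sets lebesgue"
  shows "integrable (lebesgue_on D) (\<lambda>x. g1 x \<bullet> g2 x)"
proof -
  have m1: "g1 \<in> borel_measurable lborel" and m2: "g2 \<in> borel_measurable lborel"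
    and i1: "integrable lborel (\<lambda>x. (norm (g1 x))\<^sup>2)" and i2: "integrable lborel (\<lambda>x. (norm (g2 x))\<^sup>2)"
    and z1: "\<And>x. x \<notin> D \<Longrightarrow> g1 x = 0" and z2: "\<And>x. x \<notin> D \<Longrightarrow> g2 x = 0"
    using h1 h2 by (auto simp: in_H10_with_grad_def)
  have meas: "(\<lambda>x. g1 x \<bullet> g2 x) \<in> borel_measurable lborel"
    using m1 m2 by (intro borel_measurable_inner)
  have "integrable lborel (\<lambda>x. g1 x \<bullet> g2 x)"
  proof (rule Bochner_Integration.integrable_bound[OF Bochner_Integration.integrable_add[OF i1 i2] meas])
    show "AE x in lborel. norm (g1 x \<bullet> g2 x) \<le> norm ((norm (g1 x))\<^sup>2 + (norm (g2 x))\<^sup>2)"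
    proof (rule AE_I2)
      fix x
      have "\<bar>g1 x \<bullet> g2 x\<bar> \<le> norm (g1 x) * norm (g2 x)" by (rule Cauchy_Schwarz_ineq2)
      also have "\<dots> \<le> (norm (g1 x))\<^sup>2 + (norm (g2 x))\<^sup>2"
      proof -
        have "0 \<le> (norm (g1 x) - norm (g2 x))\<^sup>2" by simp
        moreover have "0 \<le> norm (g1 x) * norm (g2 x)" by simp
        ultimately show ?thesis unfolding power2_diff by linarith
      qed
      finally show "norm (g1 x \<bullet> g2 x) \<le> norm ((norm (g1 x))\<^sup>2 + (norm (g2 x))\<^sup>2)" by simp
    qed
  qed
  then have "integrable lebesgue (\<lambda>x. g1 x \<bullet> g2 x)"
    using integrable_completion[OF meas] by simp
  moreover have "(\<lambda>x. indicator D x *\<^sub>R (g1 x \<bullet> g2 x)) = (\<lambda>x. g1 x \<bullet> g2 x)"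
    using z1 by (auto simp: fun_eq_iff indicator_def)
  ultimately show ?thesis
    using Dm by (simp add: integrable_restrict_space)
qed

lemma sf_lebesgue_on:
  assumes "bounded (D::'d::euclidean_space set)" "D \<in> sets lebesgue"
  shows "sigma_finite_measure (lebesgue_on D)"
proof -
  have "D \<in> lmeasurable" using assms by (rule bounded_set_imp_lmeasurable)
  then have fin: "emeasure lebesgue D \<noteq> \<infinity>" unfolding fmeasurable_def
    by (metis (no_types, lifting) mem_Collect_eq order_less_irrefl)
  have sp: "space (lebesgue_on D) = D" by (simp add: space_restrict_space)
  have eqm: "emeasure (lebesgue_on D) D = emeasure lebesgue D"
    using assms(2) by (intro emeasure_restrict_space) auto
  have "finite_measure (lebesgue_on D)"
    apply (rule finite_measureI)
    apply (simp only: sp eqm)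
    apply (rule fin)
    done
  then show ?thesis by (rule finite_measure.axioms(1))
qed

lemma sf_gauss_sigma:
  assumes "\<forall>l<L. 0 < \<sigma> l"
  shows "sigma_finite_measure (gauss_sigma \<sigma> L)"
  unfolding gauss_sigma_def
  by (rule prob_space_imp_sigma_finite, rule prob_space_PiM, rule prob_space_normal_density) (use assms in auto)

lemma L2_expand:
  assumes gint: "\<forall>i<N. \<forall>j<N. integrable (lebesgue_on D) (\<lambda>x. g\<phi> i x \<bullet> g\<phi> j x)" and hML: "M \<le> L"
  shows "(\<integral>y. (\<integral>x. (norm (fe_grad N M d \<sigma> L g\<phi> V x y))\<^sup>2 \<partial>lebesgue_on D) \<partial>gauss_std L)
       = (\<Sum>p\<in>Idx N M d. \<Sum>q\<in>Idx N M d. V p * Hker D g\<phi> \<sigma> M p q * V q)"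
proof -
  let ?I = "Idx N M d"
  have inner: "(\<integral>x. (norm (fe_grad N M d \<sigma> L g\<phi> V x y))\<^sup>2 \<partial>lebesgue_on D)
     = (\<Sum>p\<in>?I. \<Sum>q\<in>?I. (V p * V q * Z0 D g\<phi> (fst p) (fst q)) * (Hmu \<sigma> L (snd p) y * Hmu \<sigma> L (snd q) y))" for y
  proof -
    have "(\<lambda>x. (norm (fe_grad N M d \<sigma> L g\<phi> V x y))\<^sup>2) =
       (\<lambda>x. \<Sum>p\<in>?I. \<Sum>q\<in>?I. (V p * V q * (Hmu \<sigma> L (snd p) y * Hmu \<sigma> L (snd q) y)) * (g\<phi> (fst p) x \<bullet> g\<phi> (fst q) x))"
      unfolding power2_norm_eq_inner grad_inner by (simp add: mult_ac)
    moreover have "integrable (lebesgue_on D) (\<lambda>x. g\<phi> (fst p) x \<bullet> g\<phi> (fst q) x)" if "p \<in> ?I" "q \<in> ?I" for p q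
      using gint that by (auto simp: Idx_def)
    ultimately show ?thesis
      by (simp add: integral_sum integrable_sum Z0_def mult_ac)
  qed
  have hint: "integrable (gauss_std L) (\<lambda>y. Hmu \<sigma> L (snd p) y * Hmu \<sigma> L (snd q) y)"
     and hval: "(\<integral>y. Hmu \<sigma> L (snd p) y * Hmu \<sigma> L (snd q) y \<partial>gauss_std L) = (\<Prod>m<M. Zm \<sigma> m (snd p m) (snd q m))"
    if "p \<in> ?I" "q \<in> ?I" for p q
    using gauss_int[OF hML, of "snd p" d "snd q" \<sigma>] that by (auto simp: Idx_def)
  have "(\<integral>y. (\<integral>x. (norm (fe_grad N M d \<sigma> L g\<phi> V x y))\<^sup>2 \<partial>lebesgue_on D) \<partial>gauss_std L)
     = (\<Sum>p\<in>?I. \<Sum>q\<in>?I. (V p * V q * Z0 D g\<phi> (fst p) (fst q)) * (\<integral>y. Hmu \<sigma> L (snd p) y * Hmu \<sigma> L (snd q) y \<partial>gauss_std L))"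
    unfolding inner using hint by (simp add: integral_sum integrable_sum)
  also have "\<dots> = (\<Sum>p\<in>?I. \<Sum>q\<in>?I. V p * Hker D g\<phi> \<sigma> M p q * V q)"
    using hval by (intro sum.cong refl) (simp add: Hker_def mult_ac)
  finally show ?thesis .
qed

theorem mainTheorem3:
  fixes D :: "'d::euclidean_space set"
    and f :: "'d \<Rightarrow> real"
    and L M N :: nat
    and \<sigma> :: "nat \<Rightarrow> real"
    and dd :: "nat \<Rightarrow> nat"
    and \<phi> :: "nat \<Rightarrow> 'd \<Rightarrow> real"
    and g\<phi> :: "nat \<Rightarrow> 'd \<Rightarrow> 'd"
    and a :: "'d \<Rightarrow> (nat \<Rightarrow> real) \<Rightarrow> real"
    and c :: real
    and U W :: "nat \<times> (nat \<Rightarrow> nat) \<Rightarrow> real"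
    and S :: "nat \<times> (nat \<Rightarrow> nat) \<Rightarrow> nat \<times> (nat \<Rightarrow> nat) \<Rightarrow> real"
  defines "I \<equiv> Idx N M dd"
    and "G \<equiv> gauss_sigma \<sigma> L"
    and "B \<equiv> (\<lambda>V V'. Bform D a (gauss_sigma \<sigma> L) (fe_grad N M dd \<sigma> L g\<phi> V) (fe_grad N M dd \<sigma> L g\<phi> V'))"
  assumes D_bounded: "bounded D" and D_open: "open D" and D_nonempty: "D \<noteq> {}"
    and f_meas: "f \<in> borel_measurable (lebesgue_on D)"
    and f_L2: "integrable (lebesgue_on D) (\<lambda>x. (f x)\<^sup>2)"
    and M_le_L: "M \<le> L"
    and dd_pos: "\<forall>m<M. 1 \<le> dd m"
    and sigma_ge: "\<forall>l<L. 1 \<le> \<sigma> l"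
    and phi_H10: "\<forall>i<N. in_H10_with_grad D (\<phi> i) (g\<phi> i)"
    and phi_indep: "\<forall>cf. (AE x in lborel. (\<Sum>i<N. cf i * \<phi> i x) = 0) \<longrightarrow> (\<forall>i<N. cf i = 0)"
    and a_poly: "poly_in_y L a"
    and B_integrable: "\<forall>p\<in>I. \<forall>q\<in>I. integrable (lebesgue_on D \<Otimes>\<^sub>M G)
          (\<lambda>(x, y). a x y * (g\<phi> (fst p) x \<bullet> g\<phi> (fst q) x) * Hmu \<sigma> L (snd p) y * Hmu \<sigma> L (snd q) y)"
    and B_bounded: "\<exists>C. \<forall>V V'. \<bar>B V V'\<bar> \<le> C * L2X_norm D G (fe_grad N M dd \<sigma> L g\<phi> V) * L2X_norm D G (fe_grad N M dd \<sigma> L g\<phi> V')"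
    and c_pos: "0 < c"
    and coercive: "\<forall>V. c * L2X_norm D (gauss_std L) (fe_grad N M dd \<sigma> L g\<phi> V) \<le> sqrt (B V V)"
    and galerkin: "\<forall>V. B U V = rhs_int D f G (fe_fun N M dd \<sigma> L \<phi> V)"
    and S_inv_sqrt: "is_inv_sqrt I (Hker D g\<phi> \<sigma> M) S"
  shows "sqrt (B (\<lambda>p. U p - W p) (\<lambda>p. U p - W p))
           \<le> (1 / c) * apply_norm I S
                 (\<lambda>p. B W (unit_tensor p) - rhs_int D f G (fe_fun N M dd \<sigma> L \<phi> (unit_tensor p)))"
proof -
  have finI: "finite I" unfolding I_def by (rule finite_Idx)
  have Dlm: "D \<in> lmeasurable" using D_bounded D_open by (rule lmeasurable_open)
  then have Dm: "D \<in> sets lebesgue" by (rule fmeasurableD)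
  have sf1: "sigma_finite_measure (lebesgue_on D)" using D_bounded Dm by (rule sf_lebesgue_on)
  have sf2: "sigma_finite_measure G" unfolding G_def
    using sigma_ge by (intro sf_gauss_sigma) (auto intro: less_le_trans[OF zero_less_one])
  define b where "b p q = (\<integral>y. (\<integral>x. a x y * (g\<phi> (fst p) x \<bullet> g\<phi> (fst q) x) * Hmu \<sigma> L (snd p) y * Hmu \<sigma> L (snd q) y \<partial>lebesgue_on D) \<partial>G)" for p q
  have Bexp: "B V V' = (\<Sum>p\<in>I. \<Sum>q\<in>I. (V p * V' q) * b p q)" for V V'
  proof -
    have "B V V' = (\<integral>y. (\<integral>x. (\<Sum>p\<in>I. \<Sum>q\<in>I. (V p * V' q) * (a x y * (g\<phi> (fst p) x \<bullet> g\<phi> (fst q) x) * Hmu \<sigma> L (snd p) y * Hmu \<sigma> L (snd q) y)) \<partial>lebesgue_on D) \<partial>G)"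
      unfolding B_def Bform_def G_def[symmetric]
    proof (intro Bochner_Integration.integral_cong refl)
      fix y x
      show "a x y * (fe_grad N M dd \<sigma> L g\<phi> V x y \<bullet> fe_grad N M dd \<sigma> L g\<phi> V' x y) =
        (\<Sum>p\<in>I. \<Sum>q\<in>I. (V p * V' q) * (a x y * (g\<phi> (fst p) x \<bullet> g\<phi> (fst q) x) * Hmu \<sigma> L (snd p) y * Hmu \<sigma> L (snd q) y))"
        unfolding grad_inner I_def sum_distrib_left by (intro sum.cong refl) (simp add: mult_ac)
    qed
    also have "\<dots> = (\<Sum>p\<in>I. \<Sum>q\<in>I. (V p * V' q) * b p q)"
      unfolding b_def
      by (rule iter_int_sum[OF finI sf1 sf2]) (use B_integrable in auto)
    finally show ?thesis .
  qed
  have Bunit: "B V (unit_tensor r) = (\<Sum>p\<in>I. V p * b p r)" if r: "r \<in> I" for V r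
  proof -
    have "B V (unit_tensor r) = (\<Sum>p\<in>I. \<Sum>q\<in>I. if q = r then V p * b p r else 0)"
      unfolding Bexp by (intro sum.cong refl) (simp add: unit_tensor_def)
    also have "\<dots> = (\<Sum>p\<in>I. V p * b p r)" using finI r by simp
    finally show ?thesis .
  qed
  define E where "E = (\<lambda>p. U p - W p)"
  define R where "R = (\<lambda>p. B W (unit_tensor p) - rhs_int D f G (fe_fun N M dd \<sigma> L \<phi> (unit_tensor p)))"
  have Rr: "R r = - (\<Sum>p\<in>I. E p * b p r)" if "r \<in> I" for r
  proof -
    have "R r = B W (unit_tensor r) - B U (unit_tensor r)"
      unfolding R_def using galerkin by simp
    also have "\<dots> = - (\<Sum>p\<in>I. E p * b p r)"
      unfolding Bunit[OF that] E_def by (simp add: sum_subtractf left_diff_distrib)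
    finally show ?thesis .
  qed
  have BEE: "B E E = - (\<Sum>r\<in>I. E r * R r)"
  proof -
    have "B E E = (\<Sum>q\<in>I. \<Sum>p\<in>I. (E p * E q) * b p q)" unfolding Bexp by (rule sum.swap)
    also have "\<dots> = (\<Sum>q\<in>I. E q * (\<Sum>p\<in>I. E p * b p q))"
      by (simp add: sum_distrib_left mult_ac)
    also have "\<dots> = - (\<Sum>r\<in>I. E r * R r)"
    proof -
      have "(\<Sum>r\<in>I. E r * R r) = (\<Sum>r\<in>I. - (E r * (\<Sum>p\<in>I. E p * b p r)))"
        using Rr by (intro sum.cong) auto
      then show ?thesis by (simp add: sum_negf)
    qed
    finally show ?thesis .
  qed
  define Q where "Q = (\<Sum>p\<in>I. \<Sum>q\<in>I. E p * Hker D g\<phi> \<sigma> M p q * E q)"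
  have gint: "\<forall>i<N. \<forall>j<N. integrable (lebesgue_on D) (\<lambda>x. g\<phi> i x \<bullet> g\<phi> j x)"
    using phi_H10 Dm by (auto intro: gphi_int)
  have L2: "L2X_norm D (gauss_std L) (fe_grad N M dd \<sigma> L g\<phi> E) = sqrt Q"
    unfolding L2X_norm_def Q_def I_def using L2_expand[OF gint M_le_L] by simp
  have symK: "\<forall>p\<in>I. \<forall>q\<in>I. Hker D g\<phi> \<sigma> M p q = Hker D g\<phi> \<sigma> M q p"
    by (simp add: Hker_def Z0_def Zm_def inner_commute mult.commute)
  have cs: "(\<Sum>r\<in>I. E r * R r)\<^sup>2 \<le> Q * (\<Sum>p\<in>I. (\<Sum>q\<in>I. S p q * R q)\<^sup>2)"
    unfolding Q_def
    by (rule mat_cs[OF finI _ symK]) (use S_inv_sqrt in \<open>auto simp: is_inv_sqrt_def\<close>)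
  define X where "X = B E E"
  define Y where "Y = apply_norm I S R"
  have Y0: "0 \<le> Y" unfolding Y_def apply_norm_def by (simp add: sum_nonneg)
  have coer: "c * sqrt Q \<le> sqrt X" using coercive L2 unfolding X_def by metis
  have "\<bar>\<Sum>r\<in>I. E r * R r\<bar> = sqrt ((\<Sum>r\<in>I. E r * R r)\<^sup>2)" by simp
  also have "\<dots> \<le> sqrt (Q * (\<Sum>p\<in>I. (\<Sum>q\<in>I. S p q * R q)\<^sup>2))" using cs by (rule real_sqrt_le_mono)
  also have "\<dots> = sqrt Q * Y" unfolding Y_def apply_norm_def by (simp add: real_sqrt_mult)
  finally have XY: "X \<le> sqrt Q * Y" unfolding X_def BEE by linarith
  have main: "sqrt X \<le> (1 / c) * Y"
  proof (cases "X > 0")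
    case False
    then have "sqrt X \<le> 0" by simp
    also have "0 \<le> (1 / c) * Y" using c_pos Y0 by simp
    finally show ?thesis .
  next
    case True
    then have sX: "0 < sqrt X" by simp
    have "sqrt Q \<le> sqrt X / c" using coer c_pos by (simp add: field_simps)
    then have "sqrt Q * Y \<le> (sqrt X / c) * Y" using Y0 by (rule mult_right_mono)
    moreover have "(sqrt X / c) * Y = sqrt X * (Y / c)" by simp
    ultimately have h1: "X \<le> sqrt X * (Y / c)" using XY by linarith
    have "sqrt X * sqrt X = X" using True by simp
    with h1 have "sqrt X * sqrt X \<le> sqrt X * (Y / c)" by linarith
    then have "sqrt X \<le> Y / c" using sX by (rule mult_left_le_imp_le)
    then show ?thesis by simp
  qed
  then show ?thesis unfolding X_def Y_def E_def R_def .
qed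

end
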